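(* Consider two channels $I$ and $J$ with the same finite state set $\mathcal{H}$ and pmfs $p^I_{\mathcal{H}}$, $p^J_{\mathcal{H}}$, and let $h^I\sim p^I_{\mathcal{H}}$, $h^J\sim p^J_{\mathcal{H}}$. Assume $C_u$ is non-increasing in $h$. If $h^I$ first-order stochastically dominates $h^J$, i.e. $\mathbb{E}[f(h^I)]\ge\mathbb{E}[f(h^J)]$ for every non-decreasing $f:\mathcal{H}\to\mathbb{R}$, then $\bar A_r^{I*}\le\bar A_r^{J*}$, where $\bar A_r^{I*}$ and $\bar A_r^{J*}$ denote the optimal values of the constrained problem (with the same $C_s$, $C_u$, $\hat A_l$, $\hat A_r$ and $C^{\max}$) under channels $I$ and $J$ respectively.
   Context: Single IoT device model. Fix integers $\hat A_l,\hat A_r\ge1$; AoI states $\mathbf{A}=(A_l,A_r)\in\{1,\dots,\hat A_l\}\times\{1,\dots,\hat A_r\}$. Channel states lie in a finite set $\mathcal{H}\subset(0,\infty)$ and are i.i.d. across time slots with a given pmf. Actions $\mathbf{w}=(s,u)\in\{0,1\}^2$ with energy cost $C(\mathbf{w},h)=sC_s+uC_u(h)$, $C_s\ge0$, $C_u:\mathcal{H}\to[0,\infty)$. AoI dynamics under $\mathbf{w}=(s,u)$: $A_l(t+1)=1$ if $s=1$, else $\min\{A_l(t)+1,\hat A_l\}$; $A_r(t+1)=\min\{A_l(t)+1,\hat A_r\}$ if $u=1$, else $\min\{A_r(t)+1,\hat A_r\}$. A stationary policy $\pi$ selects (possibly randomly) an action as a function of the current $(\mathbf{A}(t),h(t))$;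 for stationary unichain $\pi$, $\bar A_r(\pi)=\limsup_{T\to\infty}\frac1T\sum_{t=1}^T\mathbb{E}[A_r(t)]$ and $\bar C(\pi)=\limsup_{T\to\infty}\frac1T\sum_{t=1}^T\mathbb{E}[C(\mathbf{w}(t),h(t))]$. Given $C^{\max}>0$ (assumed such that the problem is feasible), the constrained problem is $\bar A_r^*=\min_\pi\{\bar A_r(\pi):\bar C(\pi)\le C^{\max}\}$ over stationary unichain policies. *)

theory Defs
  imports Complex_Main "HOL-Library.Extended_Real"
begin

text \<open>System state: ((A_l, A_r), h).  Actions: (s, u) encoded as a pair of booleans.\<close>

type_synonym aoi_state = "(nat \<times> nat) \<times> real"
type_synonym action = "bool \<times> bool"

definition state_space :: "nat \<Rightarrow> nat \<Rightarrow> real set \<Rightarrow> aoi_state set" where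
  "state_space Al Ar H = ({1..Al} \<times> {1..Ar}) \<times> H"

definition aoi_next :: "nat \<Rightarrow> nat \<Rightarrow> nat \<times> nat \<Rightarrow> action \<Rightarrow> nat \<times> nat" where
  "aoi_next Al Ar A w =
     ((if fst w then 1 else min (fst A + 1) Al),
      (if snd w then min (fst A + 1) Ar else min (snd A + 1) Ar))"

definition energy_cost :: "real \<Rightarrow> (real \<Rightarrow> real) \<Rightarrow> action \<Rightarrow> real \<Rightarrow> real" where
  "energy_cost Cs Cu w h = (if fst w then Cs else 0) + (if snd w then Cu h else 0)"

definition valid_policy :: "nat \<Rightarrow> nat \<Rightarrow> real set \<Rightarrow> (aoi_state \<Rightarrow> action \<Rightarrow> real) \<Rightarrow> bool" where
  "valid_policy Al Ar H \<pi> \<longleftrightarrow>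
     (\<forall>x\<in>state_space Al Ar H. (\<forall>w. \<pi> x w \<ge> 0) \<and> (\<Sum>w\<in>UNIV. \<pi> x w) = 1)"

definition trans_prob :: "nat \<Rightarrow> nat \<Rightarrow> (real \<Rightarrow> real) \<Rightarrow> (aoi_state \<Rightarrow> action \<Rightarrow> real)
    \<Rightarrow> aoi_state \<Rightarrow> aoi_state \<Rightarrow> real" where
  "trans_prob Al Ar p \<pi> x y =
     (\<Sum>w\<in>UNIV. \<pi> x w * (if aoi_next Al Ar (fst x) w = fst y then p (snd y) else 0))"

text \<open>State distribution at time t+1 (time index 0 here = slot 1), started from A(1) = (1,1).\<close>
fun state_dist :: "nat \<Rightarrow> nat \<Rightarrow> real set \<Rightarrow> (real \<Rightarrow> real) \<Rightarrow> (aoi_state \<Rightarrow> action \<Rightarrow> real)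
    \<Rightarrow> nat \<Rightarrow> aoi_state \<Rightarrow> real" where
  "state_dist Al Ar H p \<pi> 0 y = (if fst y = (1, 1) then p (snd y) else 0)"
| "state_dist Al Ar H p \<pi> (Suc t) y =
     (\<Sum>x\<in>state_space Al Ar H. state_dist Al Ar H p \<pi> t x * trans_prob Al Ar p \<pi> x y)"

definition avg_AoI :: "nat \<Rightarrow> nat \<Rightarrow> real set \<Rightarrow> (real \<Rightarrow> real) \<Rightarrow> (aoi_state \<Rightarrow> action \<Rightarrow> real) \<Rightarrow> ereal" where
  "avg_AoI Al Ar H p \<pi> =
     limsup (\<lambda>T. ereal ((1 / real T) *
       (\<Sum>t<T. \<Sum>x\<in>state_space Al Ar H. state_dist Al Ar H p \<pi> t x * real (snd (fst x)))))"

definition avg_cost :: "nat \<Rightarrow> nat \<Rightarrow> real set \<Rightarrow> (real \<Rightarrow> real) \<Rightarrow> real \<Rightarrow> (real \<Rightarrow> real)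
    \<Rightarrow> (aoi_state \<Rightarrow> action \<Rightarrow> real) \<Rightarrow> ereal" where
  "avg_cost Al Ar H p Cs Cu \<pi> =
     limsup (\<lambda>T. ereal ((1 / real T) *
       (\<Sum>t<T. \<Sum>x\<in>state_space Al Ar H. state_dist Al Ar H p \<pi> t x *
           (\<Sum>w\<in>UNIV. \<pi> x w * energy_cost Cs Cu w (snd x)))))"

definition recurrent_class :: "nat \<Rightarrow> nat \<Rightarrow> real set \<Rightarrow> (real \<Rightarrow> real) \<Rightarrow> (aoi_state \<Rightarrow> action \<Rightarrow> real)
    \<Rightarrow> aoi_state set \<Rightarrow> bool" where
  "recurrent_class Al Ar H p \<pi> C \<longleftrightarrow>
     C \<subseteq> state_space Al Ar H \<and> C \<noteq> {} \<and>
     (\<forall>x\<in>C. \<forall>y\<in>state_space Al Ar H. trans_prob Al Ar p \<pi> x y > 0 \<longrightarrow> y \<in> C) \<and>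
     (\<forall>x\<in>C. \<forall>y\<in>C. (\<lambda>a b. a \<in> state_space Al Ar H \<and> b \<in> state_space Al Ar H
                             \<and> trans_prob Al Ar p \<pi> a b > 0)\<^sup>*\<^sup>* x y)"

definition unichain :: "nat \<Rightarrow> nat \<Rightarrow> real set \<Rightarrow> (real \<Rightarrow> real) \<Rightarrow> (aoi_state \<Rightarrow> action \<Rightarrow> real) \<Rightarrow> bool" where
  "unichain Al Ar H p \<pi> \<longleftrightarrow> (\<exists>!C. recurrent_class Al Ar H p \<pi> C)"

definition feasible_policies :: "nat \<Rightarrow> nat \<Rightarrow> real set \<Rightarrow> (real \<Rightarrow> real) \<Rightarrow> real \<Rightarrow> (real \<Rightarrow> real)
    \<Rightarrow> real \<Rightarrow> (aoi_state \<Rightarrow> action \<Rightarrow> real) set" where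
  "feasible_policies Al Ar H p Cs Cu Cmax =
     {\<pi>. valid_policy Al Ar H \<pi> \<and> unichain Al Ar H p \<pi> \<and> avg_cost Al Ar H p Cs Cu \<pi> \<le> ereal Cmax}"

definition opt_AoI :: "nat \<Rightarrow> nat \<Rightarrow> real set \<Rightarrow> (real \<Rightarrow> real) \<Rightarrow> real \<Rightarrow> (real \<Rightarrow> real)
    \<Rightarrow> real \<Rightarrow> ereal" where
  "opt_AoI Al Ar H p Cs Cu Cmax =
     (INF \<pi>\<in>feasible_policies Al Ar H p Cs Cu Cmax. avg_AoI Al Ar H p \<pi>)"

definition is_pmf_on :: "real set \<Rightarrow> (real \<Rightarrow> real) \<Rightarrow> bool" where
  "is_pmf_on H p \<longleftrightarrow> (\<forall>h\<in>H. p h \<ge> 0) \<and> (\<Sum>h\<in>H. p h) = 1"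

end

theory Submission
  imports Defs
begin

definition Fle :: "real set \<Rightarrow> (real \<Rightarrow> real) \<Rightarrow> real \<Rightarrow> real" where
  "Fle S p t = (\<Sum>x\<in>{x\<in>S. x \<le> t}. p x)"
definition Flt :: "real set \<Rightarrow> (real \<Rightarrow> real) \<Rightarrow> real \<Rightarrow> real" where
  "Flt S p t = (\<Sum>x\<in>{x\<in>S. x < t}. p x)"
definition clamp :: "real \<Rightarrow> real \<Rightarrow> real \<Rightarrow> real" where
  "clamp a b x = max a (min b x)"
definition gam :: "real set \<Rightarrow> (real \<Rightarrow> real) \<Rightarrow> (real \<Rightarrow> real) \<Rightarrow> real \<Rightarrow> real \<Rightarrow> real" where
  "gam H pI pJ hI hJ = clamp (Flt H pI hI) (Fle H pI hI) (Fle H pJ hJ)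
                     - clamp (Flt H pI hI) (Fle H pI hI) (Flt H pJ hJ)"

lemma telescope:
  fixes g :: "real \<Rightarrow> real"
  assumes "finite S"
  shows "(\<Sum>h\<in>S. g (Fle S p h) - g (Flt S p h)) = g (sum p S) - g 0"
  using assms
proof (induction S rule: finite_linorder_max_induct)
  case empty
  then show ?case by simp
next
  case (insert b S)
  have bS: "b \<notin> S" using insert by auto
  have e1: "\<And>h. h \<in> S \<Longrightarrow> {x\<in>insert b S. x \<le> h} = {x\<in>S. x \<le> h}" using insert by force
  have e2: "\<And>h. h \<in> S \<Longrightarrow> {x\<in>insert b S. x < h} = {x\<in>S. x < h}" using insert by force
  have e3: "{x\<in>insert b S. x \<le> b} = insert b S" using insert by force
  have e4: "{x\<in>insert b S. x < b} = S" using insert by force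
  have s1: "(\<Sum>h\<in>S. g (Fle (insert b S) p h) - g (Flt (insert b S) p h)) = (\<Sum>h\<in>S. g (Fle S p h) - g (Flt S p h))"
    by (rule sum.cong[OF refl]) (simp only: Fle_def Flt_def e1 e2)
  have s2: "Fle (insert b S) p b = sum p (insert b S)" by (simp only: Fle_def e3)
  have s3: "Flt (insert b S) p b = sum p S" by (simp only: Flt_def e4)
  show ?case unfolding sum.insert[OF \<open>finite S\<close> bS] s1 s2 s3 insert.IH
    using bS \<open>finite S\<close> by simp
qed

lemma clamp_swap:
  assumes "a' \<le> a" "b' \<le> b"
  shows "clamp a' a b - clamp a' a b' = clamp b' b a - clamp b' b a'"
  using assms unfolding clamp_def by (smt (verit))

lemma clamp_mono: "a \<le> b \<Longrightarrow> x \<le> y \<Longrightarrow> clamp a b x \<le> clamp a b y"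
  unfolding clamp_def by (auto simp: max_def min_def)

lemma Flt_le_Fle: "finite S \<Longrightarrow> \<forall>h\<in>S. p h \<ge> 0 \<Longrightarrow> Flt S p t \<le> Fle S p t"
  unfolding Flt_def Fle_def by (rule sum_mono2) auto

lemma Fle_Flt_diff: "finite S \<Longrightarrow> t \<in> S \<Longrightarrow> Fle S p t - Flt S p t = p t"
proof -
  assume "finite S" "t \<in> S"
  have "{x\<in>S. x \<le> t} = insert t {x\<in>S. x < t}" using \<open>t\<in>S\<close> by force
  then show ?thesis using \<open>finite S\<close> by (simp add: Fle_def Flt_def)
qed

lemma Flt_nonneg: "\<forall>h\<in>S. p h \<ge> 0 \<Longrightarrow> Flt S p t \<ge> 0"
  unfolding Flt_def by (rule sum_nonneg) auto

lemma Fle_le1: "finite S \<Longrightarrow> \<forall>h\<in>S. p h \<ge> 0 \<Longrightarrow> sum p S = 1 \<Longrightarrow> Fle S p t \<le> 1"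
proof -
  assume a: "finite S" "\<forall>h\<in>S. p h \<ge> 0" "sum p S = 1"
  have "Fle S p t \<le> sum p S" unfolding Fle_def by (rule sum_mono2) (use a in auto)
  then show ?thesis using a by simp
qed

lemma cdf_dom:
  assumes "finite H" and pI: "is_pmf_on H pI" and pJ: "is_pmf_on H pJ"
    and fosd: "\<forall>f :: real \<Rightarrow> real. mono_on H f \<longrightarrow>
                 (\<Sum>h\<in>H. f h * pI h) \<ge> (\<Sum>h\<in>H. f h * pJ h)"
  shows "Fle H pI t \<le> Fle H pJ t"
proof -
  define f where "f = (\<lambda>h::real. if t < h then 1 else (0::real))"
  have "mono_on H f" unfolding f_def by (auto intro!: mono_onI)
  then have *: "(\<Sum>h\<in>H. f h * pI h) \<ge> (\<Sum>h\<in>H. f h * pJ h)" using fosd[rule_format, of f] by simp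
  have sp: "\<And>p. (\<Sum>h\<in>H. p h) = Fle H p t + (\<Sum>h\<in>H. f h * p h)"
  proof -
    fix p :: "real \<Rightarrow> real"
    have "(\<Sum>h\<in>H. p h) = (\<Sum>h\<in>H. (if h \<le> t then p h else 0) + f h * p h)"
      by (rule sum.cong) (auto simp: f_def)
    also have "\<dots> = Fle H p t + (\<Sum>h\<in>H. f h * p h)"
      using \<open>finite H\<close> by (simp add: sum.distrib Fle_def sum.inter_filter)
    finally show "(\<Sum>h\<in>H. p h) = Fle H p t + (\<Sum>h\<in>H. f h * p h)" .
  qed
  have "sum pI H = 1" "sum pJ H = 1" using pI pJ by (auto simp: is_pmf_on_def)
  then show ?thesis using * sp[of pI] sp[of pJ] by linarith
qed

locale cpl =
  fixes H :: "real set" and pI pJ :: "real \<Rightarrow> real"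
  assumes fin: "finite H" and pI: "is_pmf_on H pI" and pJ: "is_pmf_on H pJ"
    and fosd: "\<forall>f :: real \<Rightarrow> real. mono_on H f \<longrightarrow>
                 (\<Sum>h\<in>H. f h * pI h) \<ge> (\<Sum>h\<in>H. f h * pJ h)"
begin

lemma pI0: "h \<in> H \<Longrightarrow> pI h \<ge> 0" and pJ0: "h \<in> H \<Longrightarrow> pJ h \<ge> 0"
  and sI: "sum pI H = 1" and sJ: "sum pJ H = 1"
  using pI pJ by (auto simp: is_pmf_on_def)

lemma gam_nonneg: "gam H pI pJ hI hJ \<ge> 0"
  unfolding gam_def using Flt_le_Fle[OF fin, of pI] Flt_le_Fle[OF fin, of pJ] pI0 pJ0
  by (simp add: clamp_mono)

lemma gam_row: "hI \<in> H \<Longrightarrow> (\<Sum>hJ\<in>H. gam H pI pJ hI hJ) = pI hI"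
proof -
  assume hI: "hI \<in> H"
  have "(\<Sum>hJ\<in>H. gam H pI pJ hI hJ)
     = clamp (Flt H pI hI) (Fle H pI hI) (sum pJ H) - clamp (Flt H pI hI) (Fle H pI hI) 0"
    unfolding gam_def by (rule telescope[OF fin])
  also have "\<dots> = Fle H pI hI - Flt H pI hI"
    using sI sJ Flt_nonneg[of H pI hI] Flt_le_Fle[OF fin, of pI hI] Fle_le1[OF fin, of pI hI] pI0
    by (auto simp: clamp_def)
  also have "\<dots> = pI hI" using Fle_Flt_diff[OF fin hI] .
  finally show ?thesis .
qed

lemma gam_col: "hJ \<in> H \<Longrightarrow> (\<Sum>hI\<in>H. gam H pI pJ hI hJ) = pJ hJ"
proof -
  assume hJ: "hJ \<in> H"
  have "(\<Sum>hI\<in>H. gam H pI pJ hI hJ)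
     = (\<Sum>hI\<in>H. clamp (Flt H pJ hJ) (Fle H pJ hJ) (Fle H pI hI) - clamp (Flt H pJ hJ) (Fle H pJ hJ) (Flt H pI hI))"
    unfolding gam_def
    by (rule sum.cong[OF refl], rule clamp_swap)
       (use Flt_le_Fle[OF fin] pI0 pJ0 in auto)
  also have "\<dots> = clamp (Flt H pJ hJ) (Fle H pJ hJ) (sum pI H) - clamp (Flt H pJ hJ) (Fle H pJ hJ) 0"
    by (rule telescope[OF fin])
  also have "\<dots> = Fle H pJ hJ - Flt H pJ hJ"
    using sI sJ Flt_nonneg[of H pJ hJ] Flt_le_Fle[OF fin, of pJ hJ] Fle_le1[OF fin, of pJ hJ] pJ0
    by (auto simp: clamp_def)
  also have "\<dots> = pJ hJ" using Fle_Flt_diff[OF fin hJ] .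
  finally show ?thesis .
qed

lemma gam_pos: "gam H pI pJ hI hJ > 0 \<Longrightarrow> hJ \<le> hI"
proof (rule ccontr)
  assume g: "gam H pI pJ hI hJ > 0" and "\<not> hJ \<le> hI"
  then have lt: "hI < hJ" by simp
  have "Fle H pJ hI \<le> Flt H pJ hJ"
    unfolding Fle_def Flt_def using lt fin pJ0 by (intro sum_mono2) auto
  moreover have "Fle H pI hI \<le> Fle H pJ hI" by (rule cdf_dom[OF fin pI pJ fosd])
  moreover have "Flt H pJ hJ \<le> Fle H pJ hJ" using Flt_le_Fle[OF fin] pJ0 by blast
  moreover have "Flt H pI hI \<le> Fle H pI hI" using Flt_le_Fle[OF fin] pI0 by blast
  ultimately have "gam H pI pJ hI hJ = 0" unfolding gam_def clamp_def by (auto simp: max_def min_def)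
  with g show False by simp
qed

lemma gam_le_row: "hI \<in> H \<Longrightarrow> hJ \<in> H \<Longrightarrow> gam H pI pJ hI hJ \<le> pI hI"
  using gam_row[of hI] member_le_sum[of hJ H "gam H pI pJ hI"] gam_nonneg fin by auto

lemma gam_le_col: "hI \<in> H \<Longrightarrow> hJ \<in> H \<Longrightarrow> gam H pI pJ hI hJ \<le> pJ hJ"
  using gam_col[of hJ] member_le_sum[of hI H "\<lambda>x. gam H pI pJ x hJ"] gam_nonneg fin by auto

end


definition AS :: "nat \<Rightarrow> nat \<Rightarrow> (nat \<times> nat) set" where
  "AS Al Ar = {1..Al} \<times> {1..Ar}"

definition Qf :: "real set \<Rightarrow> (real \<Rightarrow> real) \<Rightarrow> (aoi_state \<Rightarrow> action \<Rightarrow> real) \<Rightarrow> nat \<times> nat \<Rightarrow> action \<Rightarrow> real"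
  where "Qf H p \<pi> A w = (\<Sum>h\<in>H. p h * \<pi> (A,h) w)"

fun mm :: "nat \<Rightarrow> nat \<Rightarrow> (nat \<times> nat \<Rightarrow> action \<Rightarrow> real) \<Rightarrow> nat \<Rightarrow> nat \<times> nat \<Rightarrow> real" where
  "mm Al Ar Q 0 B = (if B = (1,1) then 1 else 0)"
| "mm Al Ar Q (Suc t) B = (\<Sum>A\<in>AS Al Ar. mm Al Ar Q t A * (\<Sum>w\<in>UNIV. Q A w * (if aoi_next Al Ar A w = B then 1 else 0)))"

lemma SS_eq: "state_space Al Ar H = AS Al Ar \<times> H"
  by (simp add: state_space_def AS_def)

lemma finite_AS: "finite (AS Al Ar)" by (simp add: AS_def)

lemma sum_SS:
  "finite H \<Longrightarrow> (\<Sum>x\<in>state_space Al Ar H. f x) = (\<Sum>A\<in>AS Al Ar. \<Sum>h\<in>H. f (A,h))"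
  by (simp add: SS_eq sum.cartesian_product)

lemma ifz: "(if c then a else 0) = a * (of_bool c :: real)" by simp

lemma sd_factor:
  assumes "finite H"
  shows "state_dist Al Ar H p \<pi> t y = p (snd y) * mm Al Ar (Qf H p \<pi>) t (fst y)"
proof (induction t arbitrary: y)
  case 0
  then show ?case by simp
next
  case (Suc t)
  have "state_dist Al Ar H p \<pi> (Suc t) y
      = (\<Sum>A\<in>AS Al Ar. \<Sum>h\<in>H. p h * mm Al Ar (Qf H p \<pi>) t A *
           (\<Sum>w\<in>UNIV. \<pi> (A,h) w * (if aoi_next Al Ar A w = fst y then p (snd y) else 0)))"
    using assms by (simp add: sum_SS Suc trans_prob_def)
  also have "\<dots> = (\<Sum>A\<in>AS Al Ar. \<Sum>h\<in>H. \<Sum>w\<in>UNIV. p (snd y) * (mm Al Ar (Qf H p \<pi>) t A *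
           ((p h * \<pi> (A,h) w) * of_bool (aoi_next Al Ar A w = fst y))))"
    by (intro sum.cong refl) (simp add: sum_distrib_left ifz mult_ac)
  also have "\<dots> = (\<Sum>A\<in>AS Al Ar. \<Sum>w\<in>UNIV. \<Sum>h\<in>H. p (snd y) * (mm Al Ar (Qf H p \<pi>) t A *
           ((p h * \<pi> (A,h) w) * of_bool (aoi_next Al Ar A w = fst y))))"
    by (rule sum.cong[OF refl], rule sum.swap)
  also have "\<dots> = (\<Sum>A\<in>AS Al Ar. p (snd y) * (mm Al Ar (Qf H p \<pi>) t A *
           (\<Sum>w\<in>UNIV. (\<Sum>h\<in>H. p h * \<pi> (A,h) w) * of_bool (aoi_next Al Ar A w = fst y))))"
    by (rule sum.cong[OF refl]) (simp add: sum_distrib_left sum_distrib_right)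
  also have "\<dots> = p (snd y) * mm Al Ar (Qf H p \<pi>) (Suc t) (fst y)"
    by (simp add: Qf_def sum_distrib_left ifz)
  finally show ?case .
qed

lemma mm_cong:
  assumes "\<And>A w. A \<in> AS Al Ar \<Longrightarrow> Q1 A w = Q2 A w"
  shows "mm Al Ar Q1 t = mm Al Ar Q2 t"
proof (induction t)
  case 0 then show ?case by (simp add: fun_eq_iff)
next
  case (Suc t)
  show ?case
  proof (rule ext)
    fix B
    show "mm Al Ar Q1 (Suc t) B = mm Al Ar Q2 (Suc t) B"
      unfolding mm.simps Suc.IH by (rule sum.cong[OF refl]) (simp add: assms)
  qed
qed

lemma mm_nonneg:
  assumes "\<And>A w. A \<in> AS Al Ar \<Longrightarrow> Q A w \<ge> 0"
  shows "mm Al Ar Q t B \<ge> 0"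
  using assms by (induction t arbitrary: B) (auto intro!: sum_nonneg mult_nonneg_nonneg)

lemma aoi_sum:
  assumes "finite H" "sum p H = 1"
  shows "(\<Sum>x\<in>state_space Al Ar H. state_dist Al Ar H p \<pi> t x * real (snd (fst x)))
       = (\<Sum>A\<in>AS Al Ar. mm Al Ar (Qf H p \<pi>) t A * real (snd A))"
proof -
  have "(\<Sum>x\<in>state_space Al Ar H. state_dist Al Ar H p \<pi> t x * real (snd (fst x)))
      = (\<Sum>A\<in>AS Al Ar. \<Sum>h\<in>H. p h * (mm Al Ar (Qf H p \<pi>) t A * real (snd A)))"
    using assms by (simp add: sum_SS sd_factor mult_ac)
  also have "\<dots> = (\<Sum>A\<in>AS Al Ar. mm Al Ar (Qf H p \<pi>) t A * real (snd A))"
    using assms by (simp add: sum_distrib_right[symmetric])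
  finally show ?thesis .
qed

definition Rf :: "real set \<Rightarrow> (real \<Rightarrow> real) \<Rightarrow> real \<Rightarrow> (real \<Rightarrow> real) \<Rightarrow> (aoi_state \<Rightarrow> action \<Rightarrow> real) \<Rightarrow> nat \<times> nat \<Rightarrow> real"
  where "Rf H p Cs Cu \<pi> A = (\<Sum>h\<in>H. p h * (\<Sum>w\<in>UNIV. \<pi> (A,h) w * energy_cost Cs Cu w h))"

lemma cost_sum:
  assumes "finite H"
  shows "(\<Sum>x\<in>state_space Al Ar H. state_dist Al Ar H p \<pi> t x * (\<Sum>w\<in>UNIV. \<pi> x w * energy_cost Cs Cu w (snd x)))
       = (\<Sum>A\<in>AS Al Ar. mm Al Ar (Qf H p \<pi>) t A * Rf H p Cs Cu \<pi> A)"
  using assms by (simp add: sum_SS sd_factor Rf_def sum_distrib_left mult_ac)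



definition Rr :: "nat \<Rightarrow> nat \<Rightarrow> real set \<Rightarrow> (real \<Rightarrow> real) \<Rightarrow> (aoi_state \<Rightarrow> action \<Rightarrow> real) \<Rightarrow> aoi_state \<Rightarrow> aoi_state \<Rightarrow> bool"
  where "Rr Al Ar H p \<pi> = (\<lambda>a b. a \<in> state_space Al Ar H \<and> b \<in> state_space Al Ar H
                             \<and> trans_prob Al Ar p \<pi> a b > 0)"

definition Uf :: "nat \<Rightarrow> nat \<Rightarrow> real set \<Rightarrow> (real \<Rightarrow> real) \<Rightarrow> (aoi_state \<Rightarrow> action \<Rightarrow> real) \<Rightarrow> nat \<times> nat \<Rightarrow> nat \<times> nat \<Rightarrow> bool"
  where "Uf Al Ar H p \<pi> A B \<longleftrightarrow> A \<in> AS Al Ar \<and> (\<exists>h\<in>H. p h > 0 \<and> (\<exists>w. \<pi> (A,h) w > 0 \<and> aoi_next Al Ar A w = B))"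

definition good :: "nat \<Rightarrow> nat \<Rightarrow> (nat \<times> nat \<Rightarrow> nat \<times> nat \<Rightarrow> bool) \<Rightarrow> (nat \<times> nat) set \<Rightarrow> bool"
  where "good Al Ar U S \<longleftrightarrow> S \<noteq> {} \<and> S \<subseteq> AS Al Ar \<and> (\<forall>A\<in>S. \<forall>B. U A B \<longrightarrow> B \<in> S) \<and> (\<forall>A\<in>S. \<forall>B\<in>S. U\<^sup>+\<^sup>+ A B)"

lemma rc_alt: "recurrent_class Al Ar H p \<pi> C \<longleftrightarrow>
     C \<subseteq> state_space Al Ar H \<and> C \<noteq> {} \<and>
     (\<forall>x\<in>C. \<forall>y\<in>state_space Al Ar H. trans_prob Al Ar p \<pi> x y > 0 \<longrightarrow> y \<in> C) \<and>
     (\<forall>x\<in>C. \<forall>y\<in>C. (Rr Al Ar H p \<pi>)\<^sup>*\<^sup>* x y)"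
  by (simp add: recurrent_class_def Rr_def)

locale chain =
  fixes Al Ar :: nat and H :: "real set" and p :: "real \<Rightarrow> real" and \<pi> :: "aoi_state \<Rightarrow> action \<Rightarrow> real"
  assumes Al: "Al \<ge> 1" and Ar: "Ar \<ge> 1" and fin: "finite H" and pmf: "is_pmf_on H p"
    and vp: "valid_policy Al Ar H \<pi>"
begin

abbreviation "SS \<equiv> state_space Al Ar H"
abbreviation "R \<equiv> Rr Al Ar H p \<pi>"
abbreviation "U \<equiv> Uf Al Ar H p \<pi>"
abbreviation "Hp \<equiv> {h\<in>H. p h > 0}"

lemma p0: "h \<in> H \<Longrightarrow> p h \<ge> 0" using pmf by (auto simp: is_pmf_on_def)

lemma next_AS: "A \<in> AS Al Ar \<Longrightarrow> aoi_next Al Ar A w \<in> AS Al Ar"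
  using Al Ar by (auto simp: AS_def aoi_next_def)

lemma Hp_ne: "\<exists>h\<in>H. p h > 0"
proof (rule ccontr)
  assume "\<not> ?thesis"
  then have "\<forall>h\<in>H. p h = 0" using p0 by force
  then have "sum p H = 0" by simp
  then show False using pmf by (simp add: is_pmf_on_def)
qed

lemma vp_nn: "x \<in> SS \<Longrightarrow> \<pi> x w \<ge> 0" using vp unfolding valid_policy_def by blast
lemma vp_sum: "x \<in> SS \<Longrightarrow> (\<Sum>w\<in>UNIV. \<pi> x w) = 1" using vp unfolding valid_policy_def by blast

lemma exists_act: "x \<in> SS \<Longrightarrow> \<exists>w. \<pi> x w > 0"
proof (rule ccontr)
  assume x: "x \<in> SS" and n: "\<not> (\<exists>w. \<pi> x w > 0)"
  have "\<pi> x w = 0" for w using vp_nn[OF x, of w] n by (meson linorder_not_less order.antisym)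
  then have "(\<Sum>w\<in>UNIV. \<pi> x w) = 0" by simp
  then show False using vp_sum[OF x] by simp
qed

lemma trans_pos_intro:
  assumes "x \<in> SS" "snd y \<in> H" "p (snd y) > 0" "\<pi> x w > 0" "aoi_next Al Ar (fst x) w = fst y"
  shows "trans_prob Al Ar p \<pi> x y > 0"
proof -
  have nn: "\<And>w. w \<in> UNIV \<Longrightarrow> \<pi> x w * (if aoi_next Al Ar (fst x) w = fst y then p (snd y) else 0) \<ge> 0"
    using vp_nn[OF assms(1)] p0[OF assms(2)] by simp
  have "\<pi> x w * (if aoi_next Al Ar (fst x) w = fst y then p (snd y) else 0) > 0"
    using assms by simp
  then show ?thesis unfolding trans_prob_def by (rule sum_pos2[OF finite_UNIV UNIV_I _ nn])
qed

lemma trans_pos_elim: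
  assumes "x \<in> SS" "snd y \<in> H" "trans_prob Al Ar p \<pi> x y > 0"
  obtains w where "p (snd y) > 0" "\<pi> x w > 0" "aoi_next Al Ar (fst x) w = fst y"
proof -
  let ?f = "\<lambda>w. \<pi> x w * (if aoi_next Al Ar (fst x) w = fst y then p (snd y) else 0)"
  have nn: "\<And>w. ?f w \<ge> 0"
    using vp_nn[OF assms(1)] p0[OF assms(2)] by simp
  have "\<exists>w. ?f w > 0"
  proof (rule ccontr)
    assume "\<not> (\<exists>w. ?f w > 0)"
    then have "\<And>w. ?f w = 0" using nn by (meson linorder_not_less order.antisym)
    then have "(\<Sum>w\<in>UNIV. ?f w) = 0" by (intro sum.neutral) blast
    then show False using assms(3) unfolding trans_prob_def by simp
  qed
  then obtain w where fw: "?f w > 0" by blast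
  have "\<pi> x w \<noteq> 0" "aoi_next Al Ar (fst x) w = fst y" "p (snd y) \<noteq> 0"
    using fw by (auto split: if_splits)
  moreover have "\<pi> x w \<ge> 0" "p (snd y) \<ge> 0" using vp_nn[OF assms(1)] p0[OF assms(2)] by auto
  ultimately have "\<pi> x w > 0" "p (snd y) > 0" "aoi_next Al Ar (fst x) w = fst y" by auto
  then show ?thesis using that by blast
qed

lemma SS_iff: "x \<in> SS \<longleftrightarrow> fst x \<in> AS Al Ar \<and> snd x \<in> H"
  by (cases x) (auto simp: SS_eq)

lemma R_step: "A \<in> AS Al Ar \<Longrightarrow> h \<in> H \<Longrightarrow> \<pi> (A,h) w > 0 \<Longrightarrow> h' \<in> H \<Longrightarrow> p h' > 0
   \<Longrightarrow> R (A,h) (aoi_next Al Ar A w, h')"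
proof -
  assume a: "A \<in> AS Al Ar" "h \<in> H" "\<pi> (A,h) w > 0" "h' \<in> H" "p h' > 0"
  have xs: "(A,h) \<in> SS" and ys: "(aoi_next Al Ar A w, h') \<in> SS" using a next_AS by (auto simp: SS_iff)
  have "trans_prob Al Ar p \<pi> (A,h) (aoi_next Al Ar A w, h') > 0"
    by (rule trans_pos_intro[OF xs]) (use a in auto)
  then show ?thesis unfolding Rr_def using xs ys by simp
qed

lemma U_intro: "A \<in> AS Al Ar \<Longrightarrow> h \<in> H \<Longrightarrow> p h > 0 \<Longrightarrow> \<pi> (A,h) w > 0 \<Longrightarrow> U A (aoi_next Al Ar A w)"
  unfolding Uf_def by blast

lemma R_U: "R x y \<Longrightarrow> p (snd x) > 0 \<Longrightarrow> U (fst x) (fst y)"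
proof -
  assume r: "R x y" and px: "p (snd x) > 0"
  have xs: "x \<in> SS" and ys: "y \<in> SS" and t: "trans_prob Al Ar p \<pi> x y > 0" using r by (auto simp: Rr_def)
  have ysH: "snd y \<in> H" using ys by (simp add: SS_iff)
  obtain w where "\<pi> x w > 0" "aoi_next Al Ar (fst x) w = fst y"
    using trans_pos_elim[OF xs ysH t] by blast
  then show ?thesis using U_intro[of "fst x" "snd x" w] xs px by (auto simp: SS_iff)
qed

lemma lift:
  assumes "U\<^sup>+\<^sup>+ A B"
  shows "\<exists>h0\<in>H. p h0 > 0 \<and> (\<forall>h'\<in>H. p h' > 0 \<longrightarrow> R\<^sup>+\<^sup>+ (A,h0) (B,h'))"
  using assms
proof (induction rule: converse_tranclp_induct)
  case (base y)
  then obtain h w where "y \<in> AS Al Ar" "h \<in> H" "p h > 0" "\<pi> (y,h) w > 0" "aoi_next Al Ar y w = B"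
    by (auto simp: Uf_def)
  then show ?case using R_step by (metis tranclp.r_into_trancl)
next
  case (step y z)
  then obtain h1 where h1: "h1 \<in> H" "p h1 > 0" "\<forall>h'\<in>H. p h' > 0 \<longrightarrow> R\<^sup>+\<^sup>+ (z,h1) (B,h')" by blast
  from step obtain h w where "y \<in> AS Al Ar" "h \<in> H" "p h > 0" "\<pi> (y,h) w > 0" "aoi_next Al Ar y w = z"
    by (auto simp: Uf_def)
  then have "R (y,h) (z,h1)" using R_step h1 by metis
  then show ?case using h1 \<open>h\<in>H\<close> \<open>p h > 0\<close> by (meson tranclp_into_tranclp2)
qed

lemma char_good:
  assumes g: "good Al Ar U S"
  shows "recurrent_class Al Ar H p \<pi> (S \<times> Hp)"
  unfolding rc_alt
proof (intro conjI ballI impI)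
  have SA: "S \<subseteq> AS Al Ar" and Scl: "\<And>A B. A \<in> S \<Longrightarrow> U A B \<Longrightarrow> B \<in> S"
    and Scon: "\<And>A B. A \<in> S \<Longrightarrow> B \<in> S \<Longrightarrow> U\<^sup>+\<^sup>+ A B" and Sne: "S \<noteq> {}"
    using g unfolding good_def by blast+
  show "S \<times> Hp \<subseteq> SS" using SA by (auto simp: SS_eq)
  show "S \<times> Hp \<noteq> {}" using Sne Hp_ne by auto
next
  have SA: "S \<subseteq> AS Al Ar" and Scl: "\<And>A B. A \<in> S \<Longrightarrow> U A B \<Longrightarrow> B \<in> S"
    using assms unfolding good_def by blast+
  fix x y assume x: "x \<in> S \<times> Hp" and y: "y \<in> SS" and tp: "trans_prob Al Ar p \<pi> x y > 0"
  have xs: "x \<in> SS" using x SA by (auto simp: SS_eq)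
  have px: "p (snd x) > 0" and fx: "fst x \<in> S" using x by (auto simp: mem_Times_iff)
  have r: "R x y" using xs y tp by (simp add: Rr_def)
  have "U (fst x) (fst y)" by (rule R_U[OF r px])
  then have "fst y \<in> S" using Scl fx by blast
  moreover have "p (snd y) > 0" using trans_pos_elim[OF xs _ tp] y by (auto simp: SS_iff)
  ultimately show "y \<in> S \<times> Hp" using y by (auto simp: SS_iff mem_Times_iff)
next
  have SA: "S \<subseteq> AS Al Ar" and Scl: "\<And>A B. A \<in> S \<Longrightarrow> U A B \<Longrightarrow> B \<in> S"
    and Scon: "\<And>A B. A \<in> S \<Longrightarrow> B \<in> S \<Longrightarrow> U\<^sup>+\<^sup>+ A B"
    using assms unfolding good_def by blast+
  fix x y assume x: "x \<in> S \<times> Hp" and y: "y \<in> S \<times> Hp"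
  obtain A h where xe: "x = (A,h)" by (cases x)
  obtain B h' where ye: "y = (B,h')" by (cases y)
  have A: "A \<in> S" "h \<in> H" "p h > 0" using x xe by auto
  have B: "B \<in> S" "h' \<in> H" "p h' > 0" using y ye by auto
  have AS: "A \<in> AS Al Ar" using A SA by auto
  have xs: "x \<in> SS" using AS A xe by (simp add: SS_iff)
  obtain w where w: "\<pi> (A,h) w > 0" using exists_act[OF xs] xe by blast
  define A1 where "A1 = aoi_next Al Ar A w"
  have "U A A1" unfolding A1_def by (rule U_intro[OF AS A(2) A(3) w])
  then have "A1 \<in> S" using Scl A by blast
  then have "U\<^sup>+\<^sup>+ A1 B" using Scon B by blast
  from lift[OF this] obtain h1 where h1: "h1 \<in> H" "p h1 > 0" "R\<^sup>+\<^sup>+ (A1,h1) (B,h')"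
    using B by blast
  have "R (A,h) (A1,h1)" unfolding A1_def by (rule R_step[OF AS A(2) w h1(1) h1(2)])
  then have "R\<^sup>+\<^sup>+ x y" using h1 xe ye by (meson tranclp_into_tranclp2)
  then show "R\<^sup>*\<^sup>* x y" by (rule tranclp_into_rtranclp)
qed

lemma char_rc:
  assumes rc: "recurrent_class Al Ar H p \<pi> C"
  shows "\<exists>S. C = S \<times> Hp \<and> good Al Ar U S"
proof -
  have sub: "C \<subseteq> SS" and ne: "C \<noteq> {}"
    and cl: "\<And>x y. x \<in> C \<Longrightarrow> y \<in> SS \<Longrightarrow> trans_prob Al Ar p \<pi> x y > 0 \<Longrightarrow> y \<in> C"
    and con: "\<And>x y. x \<in> C \<Longrightarrow> y \<in> C \<Longrightarrow> R\<^sup>*\<^sup>* x y"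
    using rc unfolding rc_alt by blast+
  have clR: "x \<in> C \<Longrightarrow> R x y \<Longrightarrow> y \<in> C" for x y using cl by (auto simp: Rr_def)
  have path: "R\<^sup>*\<^sup>* z v \<Longrightarrow> z \<in> C \<Longrightarrow> v \<in> C" for z v
    by (induction rule: rtranclp_induct) (auto intro: clR)
  obtain h0 where h0: "h0 \<in> H" "p h0 > 0" using Hp_ne by blast
  have succ: "\<exists>z\<in>C. R y z" if y: "y \<in> C" for y
  proof -
    have ys: "y \<in> SS" using y sub by auto
    obtain w where w: "\<pi> y w > 0" using exists_act[OF ys] by blast
    have "R (fst y, snd y) (aoi_next Al Ar (fst y) w, h0)"
      by (rule R_step) (use ys w h0 in \<open>auto simp: SS_iff\<close>)
    then have r: "R y (aoi_next Al Ar (fst y) w, h0)" by simp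
    then have "(aoi_next Al Ar (fst y) w, h0) \<in> C" using clR y by blast
    then show ?thesis using r by blast
  qed
  have pred: "\<exists>u\<in>C. R u y" if y: "y \<in> C" for y
  proof -
    obtain z where z: "z \<in> C" "R y z" using succ[OF y] by blast
    have "R\<^sup>*\<^sup>* z y" using con z y by blast
    then show ?thesis
    proof (cases rule: rtranclp.cases)
      case rtrancl_refl then show ?thesis using z y by blast
    next
      case (rtrancl_into_rtrancl u)
      then show ?thesis using path z by blast
    qed
  qed
  have ppos: "p (snd y) > 0" if y: "y \<in> C" for y
  proof -
    obtain u where u: "u \<in> C" "R u y" using pred[OF y] by blast
    have us: "u \<in> SS" and ys: "y \<in> SS" and t: "trans_prob Al Ar p \<pi> u y > 0" using u by (auto simp: Rr_def)
    show ?thesis using trans_pos_elim[OF us _ t] ys by (auto simp: SS_iff)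
  qed
  define S where "S = fst ` C"
  have shape: "C = S \<times> Hp"
  proof
    show "C \<subseteq> S \<times> Hp"
    proof
      fix y assume y: "y \<in> C"
      have "fst y \<in> S" using y by (simp add: S_def)
      moreover have "snd y \<in> Hp" using ppos[OF y] sub y by (auto simp: SS_iff)
      ultimately show "y \<in> S \<times> Hp" by (simp add: mem_Times_iff)
    qed
  next
    show "S \<times> Hp \<subseteq> C"
    proof
      fix z assume zz: "z \<in> S \<times> Hp"
      then obtain y where y: "y \<in> C" and fz: "fst z = fst y" by (auto simp: S_def mem_Times_iff)
      have h': "snd z \<in> H" "p (snd z) > 0" using zz by (auto simp: mem_Times_iff)
      obtain u where u: "u \<in> C" "R u y" using pred[OF y] by blast
      have us: "u \<in> SS" and ys: "y \<in> SS" and t: "trans_prob Al Ar p \<pi> u y > 0" using u by (auto simp: Rr_def)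
      have ysH: "snd y \<in> H" using ys by (simp add: SS_iff)
      obtain w where w: "\<pi> u w > 0" "aoi_next Al Ar (fst u) w = fst y"
        using trans_pos_elim[OF us ysH t] by blast
      have zs: "z \<in> SS" using ys fz h' by (auto simp: SS_iff)
      have "trans_prob Al Ar p \<pi> u z > 0"
        by (rule trans_pos_intro[OF us h'(1) h'(2) w(1)]) (use w fz in simp)
      then show "z \<in> C" using cl u zs by blast
    qed
  qed
  have "good Al Ar U S" unfolding good_def
  proof (intro conjI ballI allI impI)
    show "S \<noteq> {}" using ne by (simp add: S_def)
    show "S \<subseteq> AS Al Ar" using sub by (auto simp: S_def SS_iff)
  next
    fix A B assume A: "A \<in> S" and U: "U A B"
    then obtain h w where hw: "A \<in> AS Al Ar" "h \<in> H" "p h > 0" "\<pi> (A,h) w > 0" "aoi_next Al Ar A w = B"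
      unfolding Uf_def by blast
    have "(A,h) \<in> C" using shape A hw by auto
    moreover have "R (A,h) (aoi_next Al Ar A w, h0)" by (rule R_step[OF hw(1,2,4) h0])
    ultimately have "(B,h0) \<in> C" using clR hw(5) by blast
    then show "B \<in> S" using shape by auto
  next
    fix A B assume A: "A \<in> S" and B: "B \<in> S"
    have xC: "(A,h0) \<in> C" and yC: "(B,h0) \<in> C" using shape A B h0 by auto
    obtain z where z: "z \<in> C" "R (A,h0) z" using succ[OF xC] by blast
    have projU: "R\<^sup>*\<^sup>* z' v \<Longrightarrow> z' \<in> C \<Longrightarrow> U\<^sup>*\<^sup>* (fst z') (fst v)" for z' v
    proof (induction rule: rtranclp_induct)
      case base then show ?case by simp
    next
      case (step v v')
      have vC: "v \<in> C" using step path by blast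
      have "U (fst v) (fst v')" by (rule R_U[OF step(2) ppos[OF vC]])
      then show ?case using step by (meson rtranclp.rtrancl_into_rtrancl)
    qed
    have "U A (fst z)" using R_U[OF z(2)] h0 by simp
    moreover have "U\<^sup>*\<^sup>* (fst z) B" using projU[of z "(B,h0)"] con z yC by auto
    ultimately show "U\<^sup>+\<^sup>+ A B" by (meson rtranclp_into_tranclp2)
  qed
  then show ?thesis using shape by blast
qed

end

lemma unichain_transfer:
  assumes c1: "chain Al Ar H p1 \<pi>1" and c2: "chain Al Ar H p2 \<pi>2"
    and UU: "Uf Al Ar H p1 \<pi>1 = Uf Al Ar H p2 \<pi>2"
    and u2: "unichain Al Ar H p2 \<pi>2"
  shows "unichain Al Ar H p1 \<pi>1"
proof -
  interpret a: chain Al Ar H p1 \<pi>1 by (rule c1)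
  interpret b: chain Al Ar H p2 \<pi>2 by (rule c2)
  obtain C2 where C2: "recurrent_class Al Ar H p2 \<pi>2 C2"
    and uq: "\<And>C. recurrent_class Al Ar H p2 \<pi>2 C \<Longrightarrow> C = C2"
    using u2 unfolding unichain_def by blast
  obtain S where S: "C2 = S \<times> {h\<in>H. p2 h > 0}" "good Al Ar (Uf Al Ar H p2 \<pi>2) S"
    using b.char_rc[OF C2] by blast
  have ex: "recurrent_class Al Ar H p1 \<pi>1 (S \<times> {h\<in>H. p1 h > 0})"
    using a.char_good S UU by simp
  have ne2: "{h\<in>H. p2 h > 0} \<noteq> {}" using b.Hp_ne by blast
  have "C = S \<times> {h\<in>H. p1 h > 0}" if C: "recurrent_class Al Ar H p1 \<pi>1 C" for C
  proof -
    obtain S' where S': "C = S' \<times> {h\<in>H. p1 h > 0}" "good Al Ar (Uf Al Ar H p1 \<pi>1) S'"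
      using a.char_rc[OF C] by blast
    have "S' \<times> {h\<in>H. p2 h > 0} = C2" using uq b.char_good S' UU by simp
    then have "S' = S" using S(1) ne2 by (metis Times_eq_cancel2 ex_in_conv)
    then show ?thesis using S' by simp
  qed
  then show ?thesis unfolding unichain_def using ex by blast
qed



definition pol' :: "real set \<Rightarrow> (real \<Rightarrow> real) \<Rightarrow> (real \<Rightarrow> real) \<Rightarrow> (aoi_state \<Rightarrow> action \<Rightarrow> real) \<Rightarrow> aoi_state \<Rightarrow> action \<Rightarrow> real"
  where "pol' H pI pJ \<pi> x w = (if pI (snd x) > 0
      then (\<Sum>hJ\<in>H. gam H pI pJ (snd x) hJ * \<pi> (fst x, hJ) w) / pI (snd x) else \<pi> x w)"

lemma ex_pos_term:
  fixes f :: "'a \<Rightarrow> real"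
  assumes "finite S" "\<And>x. x \<in> S \<Longrightarrow> f x \<ge> 0" "sum f S > 0"
  shows "\<exists>x\<in>S. f x > 0"
proof (rule ccontr)
  assume "\<not> ?thesis"
  then have "\<And>x. x \<in> S \<Longrightarrow> f x \<le> 0" by (meson linorder_not_less)
  then have "sum f S \<le> 0" by (rule sum_nonpos)
  then show False using assms(3) by simp
qed

locale main = cpl H pI pJ for H pI pJ +
  fixes Al Ar :: nat and \<pi> :: "aoi_state \<Rightarrow> action \<Rightarrow> real"
  assumes Al: "Al \<ge> 1" and Ar: "Ar \<ge> 1" and vpJ: "valid_policy Al Ar H \<pi>"
begin

abbreviation "\<pi>' \<equiv> pol' H pI pJ \<pi>"
abbreviation "g \<equiv> gam H pI pJ"

lemma pnn: "A \<in> AS Al Ar \<Longrightarrow> h \<in> H \<Longrightarrow> \<pi> (A,h) w \<ge> 0"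
  using vpJ unfolding valid_policy_def SS_eq by blast
lemma psum: "A \<in> AS Al Ar \<Longrightarrow> h \<in> H \<Longrightarrow> (\<Sum>w\<in>UNIV. \<pi> (A,h) w) = 1"
  using vpJ unfolding valid_policy_def SS_eq by blast

lemma gam_zero_row: "hI \<in> H \<Longrightarrow> \<not> pI hI > 0 \<Longrightarrow> hJ \<in> H \<Longrightarrow> g hI hJ = 0"
  using gam_le_row[of hI hJ] gam_nonneg[of hI hJ] pI0[of hI] by linarith

lemma key: "hI \<in> H \<Longrightarrow> pI hI * \<pi>' (A,hI) w = (\<Sum>hJ\<in>H. g hI hJ * \<pi> (A,hJ) w)"
proof -
  assume hI: "hI \<in> H"
  show ?thesis
  proof (cases "pI hI > 0")
    case True then show ?thesis by (simp add: pol'_def)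
  next
    case False
    then have "(\<Sum>hJ\<in>H. g hI hJ * \<pi> (A,hJ) w) = 0" using gam_zero_row[OF hI False] by simp
    moreover have "pI hI = 0" using False pI0[OF hI] by simp
    ultimately show ?thesis by simp
  qed
qed

lemma valid': "valid_policy Al Ar H \<pi>'"
  unfolding valid_policy_def
proof (intro ballI conjI allI)
  fix x w assume x: "x \<in> state_space Al Ar H"
  then have A: "fst x \<in> AS Al Ar" and h: "snd x \<in> H" by (auto simp: SS_eq mem_Times_iff)
  have nn: "\<And>h. h \<in> H \<Longrightarrow> \<pi> (fst x, h) w \<ge> 0" using pnn[OF A] by blast
  have nx: "\<pi> x w \<ge> 0" using pnn[OF A h, of w] by simp
  show "\<pi>' x w \<ge> 0"
    using nn nx h gam_nonneg
    by (auto simp: pol'_def intro!: divide_nonneg_pos sum_nonneg mult_nonneg_nonneg)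
  show "(\<Sum>w\<in>UNIV. \<pi>' x w) = 1"
  proof (cases "pI (snd x) > 0")
    case True
    have "(\<Sum>w\<in>UNIV. \<pi>' x w) = (\<Sum>w\<in>UNIV. \<Sum>hJ\<in>H. g (snd x) hJ * \<pi> (fst x, hJ) w) / pI (snd x)"
      using True by (simp add: pol'_def sum_divide_distrib)
    also have "(\<Sum>w\<in>UNIV. \<Sum>hJ\<in>H. g (snd x) hJ * \<pi> (fst x, hJ) w) = (\<Sum>hJ\<in>H. g (snd x) hJ * (\<Sum>w\<in>UNIV. \<pi> (fst x, hJ) w))"
      by (subst sum.swap) (simp add: sum_distrib_left)
    also have "\<dots> = (\<Sum>hJ\<in>H. g (snd x) hJ)" using psum[OF A] by simp
    also have "\<dots> = pI (snd x)" using gam_row[OF h] .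
    finally show ?thesis using True by simp
  next
    case False
    then show ?thesis using psum[OF A h] by (simp add: pol'_def)
  qed
qed

lemma Q_eq: "A \<in> AS Al Ar \<Longrightarrow> Qf H pI \<pi>' A w = Qf H pJ \<pi> A w"
proof -
  assume A: "A \<in> AS Al Ar"
  have "Qf H pI \<pi>' A w = (\<Sum>hI\<in>H. \<Sum>hJ\<in>H. g hI hJ * \<pi> (A,hJ) w)"
    unfolding Qf_def by (rule sum.cong[OF refl]) (rule key)
  also have "\<dots> = (\<Sum>hJ\<in>H. (\<Sum>hI\<in>H. g hI hJ) * \<pi> (A,hJ) w)"
    by (subst sum.swap) (simp add: sum_distrib_right)
  also have "\<dots> = Qf H pJ \<pi> A w" unfolding Qf_def by (rule sum.cong[OF refl]) (simp add: gam_col)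
  finally show ?thesis .
qed


lemma E_mono:
  assumes Cu: "\<forall>h1\<in>H. \<forall>h2\<in>H. h1 \<le> h2 \<longrightarrow> Cu h2 \<le> Cu h1"
    and "hI \<in> H" "hJ \<in> H" "hJ \<le> hI"
  shows "energy_cost Cs Cu w hI \<le> energy_cost Cs Cu w hJ"
  using assms unfolding energy_cost_def by auto

lemma Rf_le:
  assumes Cu: "\<forall>h1\<in>H. \<forall>h2\<in>H. h1 \<le> h2 \<longrightarrow> Cu h2 \<le> Cu h1"
    and A: "A \<in> AS Al Ar"
  shows "Rf H pI Cs Cu \<pi>' A \<le> Rf H pJ Cs Cu \<pi> A"
proof -
  have "Rf H pI Cs Cu \<pi>' A = (\<Sum>hI\<in>H. \<Sum>w\<in>UNIV. (pI hI * \<pi>' (A,hI) w) * energy_cost Cs Cu w hI)"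
    unfolding Rf_def by (simp add: sum_distrib_left mult.assoc)
  also have "\<dots> = (\<Sum>hI\<in>H. \<Sum>w\<in>UNIV. \<Sum>hJ\<in>H. g hI hJ * \<pi> (A,hJ) w * energy_cost Cs Cu w hI)"
    by (intro sum.cong refl) (simp add: key sum_distrib_right)
  also have "\<dots> \<le> (\<Sum>hI\<in>H. \<Sum>w\<in>UNIV. \<Sum>hJ\<in>H. g hI hJ * \<pi> (A,hJ) w * energy_cost Cs Cu w hJ)"
  proof (intro sum_mono)
    fix hI w hJ assume hI: "hI \<in> H" and hJ: "hJ \<in> H"
    show "g hI hJ * \<pi> (A,hJ) w * energy_cost Cs Cu w hI \<le> g hI hJ * \<pi> (A,hJ) w * energy_cost Cs Cu w hJ"
    proof (cases "g hI hJ > 0")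
      case True
      then have "hJ \<le> hI" by (rule gam_pos)
      then have "energy_cost Cs Cu w hI \<le> energy_cost Cs Cu w hJ" using E_mono[OF Cu hI hJ] by blast
      moreover have "g hI hJ * \<pi> (A,hJ) w \<ge> 0" using gam_nonneg pnn[OF A hJ] by simp
      ultimately show ?thesis by (simp add: mult_left_mono)
    next
      case False
      then have "g hI hJ = 0" using gam_nonneg[of hI hJ] by linarith
      then show ?thesis by simp
    qed
  qed
  also have "\<dots> = (\<Sum>w\<in>UNIV. \<Sum>hI\<in>H. \<Sum>hJ\<in>H. g hI hJ * \<pi> (A,hJ) w * energy_cost Cs Cu w hJ)"
    by (rule sum.swap)
  also have "\<dots> = (\<Sum>w\<in>UNIV. \<Sum>hJ\<in>H. \<Sum>hI\<in>H. g hI hJ * \<pi> (A,hJ) w * energy_cost Cs Cu w hJ)"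
    by (rule sum.cong[OF refl], rule sum.swap)
  also have "\<dots> = (\<Sum>w\<in>UNIV. \<Sum>hJ\<in>H. pJ hJ * \<pi> (A,hJ) w * energy_cost Cs Cu w hJ)"
    by (intro sum.cong refl) (simp add: sum_distrib_right[symmetric] gam_col)
  also have "\<dots> = (\<Sum>hJ\<in>H. \<Sum>w\<in>UNIV. pJ hJ * \<pi> (A,hJ) w * energy_cost Cs Cu w hJ)"
    by (rule sum.swap)
  also have "\<dots> = Rf H pJ Cs Cu \<pi> A"
    unfolding Rf_def by (simp add: sum_distrib_left mult.assoc)
  finally show ?thesis .
qed

lemma U_eq: "Uf Al Ar H pI \<pi>' = Uf Al Ar H pJ \<pi>"
proof (intro ext iffI)
  fix A B assume u: "Uf Al Ar H pI \<pi>' A B"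
  then obtain hI w where hw: "A \<in> AS Al Ar" "hI \<in> H" "pI hI > 0" "\<pi>' (A,hI) w > 0" "aoi_next Al Ar A w = B"
    unfolding Uf_def by blast
  have pos: "(\<Sum>hJ\<in>H. g hI hJ * \<pi> (A,hJ) w) > 0" using key[OF hw(2), of A w] mult_pos_pos[OF hw(3) hw(4)] by simp
  have nnT: "\<And>hJ. hJ \<in> H \<Longrightarrow> g hI hJ * \<pi> (A,hJ) w \<ge> 0"
    using gam_nonneg pnn[OF hw(1)] by (simp add: mult_nonneg_nonneg)
  obtain hJ where hJ: "hJ \<in> H" "g hI hJ * \<pi> (A,hJ) w > 0"
    using ex_pos_term[OF fin nnT pos] by blast
  have gp: "g hI hJ > 0" and pp: "\<pi> (A,hJ) w > 0"
    using hJ(2) gam_nonneg[of hI hJ] pnn[OF hw(1) hJ(1), of w] by (auto simp: zero_less_mult_iff)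
  have "pJ hJ > 0" using gp gam_le_col[OF hw(2) hJ(1)] by linarith
  then show "Uf Al Ar H pJ \<pi> A B" unfolding Uf_def using hw hJ pp by blast
next
  fix A B assume u: "Uf Al Ar H pJ \<pi> A B"
  then obtain hJ w where hw: "A \<in> AS Al Ar" "hJ \<in> H" "pJ hJ > 0" "\<pi> (A,hJ) w > 0" "aoi_next Al Ar A w = B"
    unfolding Uf_def by blast
  have "(\<Sum>hI\<in>H. g hI hJ) > 0" using gam_col[OF hw(2)] hw by simp
  moreover have "\<And>hI. hI \<in> H \<Longrightarrow> g hI hJ \<ge> 0" using gam_nonneg by simp
  ultimately obtain hI where hI: "hI \<in> H" "g hI hJ > 0"
    using ex_pos_term[OF fin, of "\<lambda>hI. g hI hJ"] by blast
  have pIp: "pI hI > 0" using hI gam_le_row[OF hI(1) hw(2)] by linarith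
  have "g hI hJ * \<pi> (A,hJ) w \<le> (\<Sum>h\<in>H. g hI h * \<pi> (A,h) w)"
    by (rule member_le_sum[OF hw(2) _ fin]) (use gam_nonneg pnn[OF hw(1)] in simp)
  moreover have "g hI hJ * \<pi> (A,hJ) w > 0" using hI hw by simp
  ultimately have "pI hI * \<pi>' (A,hI) w > 0" using key[OF hI(1), of A w] by linarith
  then have "\<pi>' (A,hI) w > 0" using pIp by (simp add: zero_less_mult_iff)
  then show "Uf Al Ar H pI \<pi>' A B" unfolding Uf_def using hw hI pIp by blast
qed

end


theorem theorem2:
  fixes Al Ar :: nat and H :: "real set" and pI pJ :: "real \<Rightarrow> real"
    and Cs Cmax :: real and Cu :: "real \<Rightarrow> real"
  assumes "Al \<ge> 1" and "Ar \<ge> 1"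
    and "finite H" and "H \<noteq> {}" and "H \<subseteq> {0<..}"
    and "is_pmf_on H pI" and "is_pmf_on H pJ"
    and "Cs \<ge> 0" and "\<forall>h\<in>H. Cu h \<ge> 0"
    and "Cmax > 0"
    and "feasible_policies Al Ar H pI Cs Cu Cmax \<noteq> {}"
    and "feasible_policies Al Ar H pJ Cs Cu Cmax \<noteq> {}"
    and Cu_nonincr: "\<forall>h1\<in>H. \<forall>h2\<in>H. h1 \<le> h2 \<longrightarrow> Cu h2 \<le> Cu h1"
    and fosd: "\<forall>f :: real \<Rightarrow> real. mono_on H f \<longrightarrow>
                 (\<Sum>h\<in>H. f h * pI h) \<ge> (\<Sum>h\<in>H. f h * pJ h)"
  shows "opt_AoI Al Ar H pI Cs Cu Cmax \<le> opt_AoI Al Ar H pJ Cs Cu Cmax"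
proof -
  interpret cpl H pI pJ using assms by unfold_locales
  have le: "opt_AoI Al Ar H pI Cs Cu Cmax \<le> avg_AoI Al Ar H pJ \<pi>"
    if F: "\<pi> \<in> feasible_policies Al Ar H pJ Cs Cu Cmax" for \<pi>
  proof -
    have vJ: "valid_policy Al Ar H \<pi>" and uJ: "unichain Al Ar H pJ \<pi>"
      and cJ: "avg_cost Al Ar H pJ Cs Cu \<pi> \<le> ereal Cmax"
      using F by (auto simp: feasible_policies_def)
    interpret m: main H pI pJ Al Ar \<pi> by unfold_locales (use assms vJ in auto)
    have chJ: "chain Al Ar H pJ \<pi>" by unfold_locales (use assms vJ in auto)
    have chI: "chain Al Ar H pI (pol' H pI pJ \<pi>)" by unfold_locales (use assms m.valid' in auto)
    have uI: "unichain Al Ar H pI (pol' H pI pJ \<pi>)"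
      by (rule unichain_transfer[OF chI chJ m.U_eq uJ])
    have mmEq: "mm Al Ar (Qf H pI (pol' H pI pJ \<pi>)) t = mm Al Ar (Qf H pJ \<pi>) t" for t
      by (rule mm_cong) (rule m.Q_eq)
    have aoiEq: "avg_AoI Al Ar H pI (pol' H pI pJ \<pi>) = avg_AoI Al Ar H pJ \<pi>"
      unfolding avg_AoI_def aoi_sum[OF fin sI] aoi_sum[OF fin sJ] mmEq ..
    have Qnn: "Qf H pJ \<pi> A w \<ge> 0" if "A \<in> AS Al Ar" for A w
      unfolding Qf_def using pJ0 m.pnn[OF that] by (intro sum_nonneg mult_nonneg_nonneg) auto
    have mnn: "mm Al Ar (Qf H pJ \<pi>) t A \<ge> 0" for t A
      by (rule mm_nonneg) (rule Qnn)
    have costLe: "avg_cost Al Ar H pI Cs Cu (pol' H pI pJ \<pi>) \<le> avg_cost Al Ar H pJ Cs Cu \<pi>"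
      unfolding avg_cost_def cost_sum[OF fin] mmEq
    proof (rule Limsup_mono[OF always_eventually], rule allI)
      fix T :: nat
      have "(\<Sum>t<T. \<Sum>A\<in>AS Al Ar. mm Al Ar (Qf H pJ \<pi>) t A * Rf H pI Cs Cu (pol' H pI pJ \<pi>) A)
          \<le> (\<Sum>t<T. \<Sum>A\<in>AS Al Ar. mm Al Ar (Qf H pJ \<pi>) t A * Rf H pJ Cs Cu \<pi> A)"
        by (intro sum_mono mult_left_mono m.Rf_le[OF Cu_nonincr] mnn)
      then show "ereal (1 / real T * (\<Sum>t<T. \<Sum>A\<in>AS Al Ar. mm Al Ar (Qf H pJ \<pi>) t A * Rf H pI Cs Cu (pol' H pI pJ \<pi>) A))
          \<le> ereal (1 / real T * (\<Sum>t<T. \<Sum>A\<in>AS Al Ar. mm Al Ar (Qf H pJ \<pi>) t A * Rf H pJ Cs Cu \<pi> A))"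
        by (simp add: divide_right_mono)
    qed
    have "pol' H pI pJ \<pi> \<in> feasible_policies Al Ar H pI Cs Cu Cmax"
      unfolding feasible_policies_def using m.valid' uI costLe cJ by auto
    then have "opt_AoI Al Ar H pI Cs Cu Cmax \<le> avg_AoI Al Ar H pI (pol' H pI pJ \<pi>)"
      unfolding opt_AoI_def by (rule INF_lower)
    then show ?thesis using aoiEq by simp
  qed
  show ?thesis unfolding opt_AoI_def[of Al Ar H pJ Cs Cu Cmax]
    by (rule INF_greatest) (rule le)
qed


end
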